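(* Consider mixed site/bond percolation on the $m\times m$ grid $[m]^2$ in which each node is open with probability $p$ and each link is open with probability $q$, all independently. Then the size of the largest bond-connected component stochastically dominates the size of the largest open component in site percolation on $[m]^2$ in which each node is open independently with probability $pq^2$.
   Context: The grid has node set $[m]^2=\{1,\dots,m\}^2$, and links between pairs of nodes at $\ell_1$ distance one (with the same adjacency used in both models). In the mixed model, two nodes $u,v$ are bond-connected if there is a sequence of open nodes $u=u_1,\dots,u_\ell=v$ such that each link $u_iu_{i+1}$ is open; bond-connected components are the classes of this relation. In site percolation, open components are the maximal sets of open nodes connected through adjacent open nodes. *)

theory Defs
  imports "HOL-Probability.Probability"
begin

type_synonym node = "nat \<times> nat"

definition grid :: "nat \<Rightarrow> node set" where
  "grid m = {1..m} \<times> {1..m}"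

definition adj :: "node \<Rightarrow> node \<Rightarrow> bool" where
  "adj u v \<longleftrightarrow> \<bar>int (fst u) - int (fst v)\<bar> + \<bar>int (snd u) - int (snd v)\<bar> = 1"

definition links :: "nat \<Rightarrow> node set set" where
  "links m = {{u, v} | u v. u \<in> grid m \<and> v \<in> grid m \<and> adj u v}"

definition bond_step :: "nat \<Rightarrow> (node \<Rightarrow> bool) \<Rightarrow> (node set \<Rightarrow> bool) \<Rightarrow> node \<Rightarrow> node \<Rightarrow> bool" where
  "bond_step m \<omega> \<eta> x y \<longleftrightarrow> x \<in> grid m \<and> y \<in> grid m \<and> \<omega> x \<and> \<omega> y \<and> adj x y \<and> \<eta> {x, y}"

definition bond_connected :: "nat \<Rightarrow> (node \<Rightarrow> bool) \<Rightarrow> (node set \<Rightarrow> bool) \<Rightarrow> node \<Rightarrow> node \<Rightarrow> bool" where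
  "bond_connected m \<omega> \<eta> u v \<longleftrightarrow> u \<in> grid m \<and> \<omega> u \<and> (bond_step m \<omega> \<eta>)\<^sup>*\<^sup>* u v"

definition bond_components :: "nat \<Rightarrow> (node \<Rightarrow> bool) \<Rightarrow> (node set \<Rightarrow> bool) \<Rightarrow> node set set" where
  "bond_components m \<omega> \<eta> = {{v. bond_connected m \<omega> \<eta> u v} | u. u \<in> grid m \<and> \<omega> u}"

definition largest_bond :: "nat \<Rightarrow> (node \<Rightarrow> bool) \<Rightarrow> (node set \<Rightarrow> bool) \<Rightarrow> nat" where
  "largest_bond m \<omega> \<eta> = Max (insert 0 (card ` bond_components m \<omega> \<eta>))"

definition site_step :: "nat \<Rightarrow> (node \<Rightarrow> bool) \<Rightarrow> node \<Rightarrow> node \<Rightarrow> bool" where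
  "site_step m \<omega> x y \<longleftrightarrow> x \<in> grid m \<and> y \<in> grid m \<and> \<omega> x \<and> \<omega> y \<and> adj x y"

definition site_components :: "nat \<Rightarrow> (node \<Rightarrow> bool) \<Rightarrow> node set set" where
  "site_components m \<omega> = {{v. (site_step m \<omega>)\<^sup>*\<^sup>* u v} | u. u \<in> grid m \<and> \<omega> u}"

definition largest_site :: "nat \<Rightarrow> (node \<Rightarrow> bool) \<Rightarrow> nat" where
  "largest_site m \<omega> = Max (insert 0 (card ` site_components m \<omega>))"

definition node_pmf :: "nat \<Rightarrow> real \<Rightarrow> (node \<Rightarrow> bool) pmf" where
  "node_pmf m p = Pi_pmf (grid m) False (\<lambda>_. bernoulli_pmf p)"

definition link_pmf :: "nat \<Rightarrow> real \<Rightarrow> (node set \<Rightarrow> bool) pmf" where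
  "link_pmf m q = Pi_pmf (links m) False (\<lambda>_. bernoulli_pmf q)"

definition mixed_pmf :: "nat \<Rightarrow> real \<Rightarrow> real \<Rightarrow> ((node \<Rightarrow> bool) \<times> (node set \<Rightarrow> bool)) pmf" where
  "mixed_pmf m p q = pair_pmf (node_pmf m p) (link_pmf m q)"

definition stoch_dominates :: "nat pmf \<Rightarrow> nat pmf \<Rightarrow> bool" where
  "stoch_dominates X Y \<longleftrightarrow> (\<forall>k. measure_pmf.prob Y {k..} \<le> measure_pmf.prob X {k..})"

end

theory Submission
  imports Defs
begin


lemma bern_and:
  assumes "0 \<le> p" "p \<le> 1" "0 \<le> q" "q \<le> 1"
  shows "map_pmf (\<lambda>(a,b). a \<and> b) (pair_pmf (bernoulli_pmf p) (bernoulli_pmf q)) = bernoulli_pmf (p*q)"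
proof (rule pmf_eqI)
  fix i :: bool
  have pq: "0 \<le> p*q" "p*q \<le> 1" using assms by (auto intro: mult_le_one)
  have T: "(\<lambda>(a,b). a \<and> b) -` {True} = {(True,True)}" by auto
  have F: "(\<lambda>(a,b). a \<and> b) -` {False} = UNIV - {(True,True)}" by auto
  show "pmf (map_pmf (\<lambda>(a,b). a \<and> b) (pair_pmf (bernoulli_pmf p) (bernoulli_pmf q))) i = pmf (bernoulli_pmf (p*q)) i"
  proof (cases i)
    case True
    then show ?thesis using assms pq by (simp add: pmf_map T measure_pmf_single pmf_pair)
  next
    case False
    have "measure_pmf.prob (pair_pmf (bernoulli_pmf p) (bernoulli_pmf q)) (UNIV - {(True,True)})
      = 1 - measure_pmf.prob (pair_pmf (bernoulli_pmf p) (bernoulli_pmf q)) {(True,True)}"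
      using measure_pmf.prob_compl[where M="pair_pmf (bernoulli_pmf p) (bernoulli_pmf q)" and A="{(True,True)}"]
      by simp
    then show ?thesis using assms pq False
      by (simp add: pmf_map F measure_pmf_single pmf_pair)
  qed
qed

lemma Pi_pmf_pair:
  assumes "finite A"
  shows "Pi_pmf A (d1,d2) (\<lambda>x. pair_pmf (P x) (Q x)) =
         map_pmf (\<lambda>(f,g) x. (f x, g x)) (pair_pmf (Pi_pmf A d1 P) (Pi_pmf A d2 Q))"
proof (rule pmf_eqI)
  fix t :: "'a \<Rightarrow> 'b \<times> 'c"
  let ?h = "\<lambda>(f,g) x. (f x, g x)"
  have inj: "inj (?h :: ('a \<Rightarrow> 'b) \<times> ('a \<Rightarrow> 'c) \<Rightarrow> _)"
    by (auto simp: inj_def fun_eq_iff)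
  have t: "t = ?h (fst \<circ> t, snd \<circ> t)" by auto
  have "pmf (map_pmf ?h (pair_pmf (Pi_pmf A d1 P) (Pi_pmf A d2 Q))) t
      = pmf (pair_pmf (Pi_pmf A d1 P) (Pi_pmf A d2 Q)) (fst \<circ> t, snd \<circ> t)"
    by (subst t, subst pmf_map_inj'[OF inj]) simp
  also have "\<dots> = pmf (Pi_pmf A (d1,d2) (\<lambda>x. pair_pmf (P x) (Q x))) t"
    using assms
    apply (simp add: pmf_pair pmf_Pi prod.distrib[symmetric])
    apply (auto simp: prod_eq_iff intro!: prod.cong)
     apply (metis pmf_pair prod.collapse)+
    done
  finally show "pmf (Pi_pmf A (d1,d2) (\<lambda>x. pair_pmf (P x) (Q x))) t =
     pmf (map_pmf ?h (pair_pmf (Pi_pmf A d1 P) (Pi_pmf A d2 Q))) t" by simp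
qed



definition HA :: "nat \<Rightarrow> node set" where "HA m = {(i,j). 1\<le>i \<and> i<m \<and> 1\<le>j \<and> j\<le>m}"
definition VA :: "nat \<Rightarrow> node set" where "VA m = {(i,j). 1\<le>i \<and> i\<le>m \<and> 1\<le>j \<and> j<m}"
definition rt :: "node \<Rightarrow> node" where "rt x = (Suc (fst x), snd x)"
definition up :: "node \<Rightarrow> node" where "up x = (fst x, Suc (snd x))"
definition HL :: "nat \<Rightarrow> node set set" where "HL m = (\<lambda>x. {x, rt x}) ` HA m"
definition VL :: "nat \<Rightarrow> node set set" where "VL m = (\<lambda>x. {x, up x}) ` VA m"
definition own :: "node set \<Rightarrow> node" where "own e = (Min (fst ` e), Min (snd ` e))"
definition hH :: "nat \<Rightarrow> node set \<Rightarrow> node" where "hH m e = (if e \<in> HL m then own e else (0,0))"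
definition hV :: "nat \<Rightarrow> node set \<Rightarrow> node" where "hV m e = (if e \<in> VL m then own e else (0,0))"

lemma own_rt[simp]: "own {x, rt x} = x"
  by (cases x) (auto simp: own_def rt_def)
lemma own_up[simp]: "own {x, up x} = x"
  by (cases x) (auto simp: own_def up_def)

lemma finite_grid[simp]: "finite (grid m)" by (simp add: grid_def)
lemma HA_grid: "HA m \<subseteq> grid m" by (auto simp: HA_def grid_def)
lemma VA_grid: "VA m \<subseteq> grid m" by (auto simp: VA_def grid_def)
lemma finite_HA[simp]: "finite (HA m)" by (rule finite_subset[OF HA_grid finite_grid])
lemma finite_VA[simp]: "finite (VA m)" by (rule finite_subset[OF VA_grid finite_grid])
lemma finite_HL[simp]: "finite (HL m)" by (simp add: HL_def)
lemma finite_VL[simp]: "finite (VL m)" by (simp add: VL_def)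

lemma adj_iff: "adj (a,b) (c,d) \<longleftrightarrow> (c = Suc a \<and> d = b) \<or> (a = Suc c \<and> d = b) \<or> (c = a \<and> d = Suc b) \<or> (c = a \<and> b = Suc d)"
  unfolding adj_def by (simp add: abs_if) arith

lemma HL_VL_disj: "HL m \<inter> VL m = {}"
  by (auto simp: HL_def VL_def rt_def up_def doubleton_eq_iff)

lemma links_eq: "links m = HL m \<union> VL m"
proof
  show "links m \<subseteq> HL m \<union> VL m"
  proof
    fix e assume "e \<in> links m"
    then obtain a b c d where e: "e = {(a,b),(c,d)}" and g: "(a,b) \<in> grid m" "(c,d) \<in> grid m"
      and ad: "adj (a,b) (c,d)" by (auto simp: links_def)
    from ad have "(c = Suc a \<and> d = b) \<or> (a = Suc c \<and> d = b) \<or> (c = a \<and> d = Suc b) \<or> (c = a \<and> b = Suc d)"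
      by (simp add: adj_iff)
    then show "e \<in> HL m \<union> VL m"
    proof (elim disjE)
      assume h: "c = Suc a \<and> d = b"
      then have "e = {(a,b), rt (a,b)}" "(a,b) \<in> HA m" using e g by (auto simp: rt_def HA_def grid_def)
      then show ?thesis by (auto simp: HL_def)
    next
      assume h: "a = Suc c \<and> d = b"
      then have "e = {(c,d), rt (c,d)}" "(c,d) \<in> HA m" using e g by (auto simp: rt_def HA_def grid_def)
      then show ?thesis by (auto simp: HL_def)
    next
      assume h: "c = a \<and> d = Suc b"
      then have "e = {(a,b), up (a,b)}" "(a,b) \<in> VA m" using e g by (auto simp: up_def VA_def grid_def)
      then show ?thesis by (auto simp: VL_def)
    next
      assume h: "c = a \<and> b = Suc d"
      then have "e = {(c,d), up (c,d)}" "(c,d) \<in> VA m" using e g by (auto simp: up_def VA_def grid_def)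
      then show ?thesis by (auto simp: VL_def)
    qed
  qed
next
  show "HL m \<union> VL m \<subseteq> links m"
  proof
    fix e assume "e \<in> HL m \<union> VL m"
    then obtain x where "(x \<in> HA m \<and> e = {x, rt x}) \<or> (x \<in> VA m \<and> e = {x, up x})"
      by (auto simp: HL_def VL_def)
    then show "e \<in> links m"
    proof
      assume h: "x \<in> HA m \<and> e = {x, rt x}"
      then have "x \<in> grid m" "rt x \<in> grid m" "adj x (rt x)"
        by (cases x; auto simp: HA_def grid_def rt_def adj_iff)+
      then show ?thesis using h unfolding links_def by blast
    next
      assume h: "x \<in> VA m \<and> e = {x, up x}"
      then have "x \<in> grid m" "up x \<in> grid m" "adj x (up x)"
        by (cases x; auto simp: VA_def grid_def up_def adj_iff)+
      then show ?thesis using h unfolding links_def by blast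
    qed
  qed
qed

lemma bij_hH: "bij_betw (hH m) (HL m) (HA m)"
proof -
  have "hH m ` HL m = own ` HL m" by (auto simp: hH_def)
  also have "\<dots> = HA m" by (simp add: HL_def image_image)
  finally show ?thesis unfolding bij_betw_def inj_on_def hH_def HL_def by auto
qed
lemma bij_hV: "bij_betw (hV m) (VL m) (VA m)"
proof -
  have "hV m ` VL m = own ` VL m" by (auto simp: hV_def)
  also have "\<dots> = VA m" by (simp add: VL_def image_image)
  finally show ?thesis unfolding bij_betw_def inj_on_def hV_def VL_def by auto
qed

lemma hH_out: "e \<notin> HL m \<Longrightarrow> hH m e \<notin> HA m" by (simp add: hH_def HA_def)
lemma hV_out: "e \<notin> VL m \<Longrightarrow> hV m e \<notin> VA m" by (simp add: hV_def VA_def)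

lemma Pi_HL: "Pi_pmf (HL m) False (\<lambda>_. B) =
  map_pmf (\<lambda>R e. if hH m e \<in> HA m then R (hH m e) else False) (Pi_pmf (grid m) False (\<lambda>_. B))"
  apply (subst Pi_pmf_bij_betw[where h="hH m"])
     apply simp
    apply (rule bij_hH)
   apply (erule hH_out)
  apply (subst Pi_pmf_subset[OF finite_grid HA_grid])
  apply (simp add: map_pmf_comp o_def)
  done

lemma Pi_VL: "Pi_pmf (VL m) False (\<lambda>_. B) =
  map_pmf (\<lambda>R e. if hV m e \<in> VA m then R (hV m e) else False) (Pi_pmf (grid m) False (\<lambda>_. B))"
  apply (subst Pi_pmf_bij_betw[where h="hV m"])
     apply simp
    apply (rule bij_hV)
   apply (erule hV_out)
  apply (subst Pi_pmf_subset[OF finite_grid VA_grid])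
  apply (simp add: map_pmf_comp o_def)
  done

definition eta :: "nat \<Rightarrow> (node \<Rightarrow> bool) \<Rightarrow> (node \<Rightarrow> bool) \<Rightarrow> node set \<Rightarrow> bool" where
  "eta m R U = (\<lambda>e. if e \<in> HL m then (if hH m e \<in> HA m then R (hH m e) else False)
                    else (if hV m e \<in> VA m then U (hV m e) else False))"

lemma link_pmf_eq: "link_pmf m q = map_pmf (\<lambda>(R,U). eta m R U)
   (pair_pmf (Pi_pmf (grid m) False (\<lambda>_. bernoulli_pmf q)) (Pi_pmf (grid m) False (\<lambda>_. bernoulli_pmf q)))"
  unfolding link_pmf_def links_eq
  apply (subst Pi_pmf_union[OF finite_HL finite_VL HL_VL_disj])
  apply (subst Pi_HL, subst Pi_VL)
  apply (subst map_pair[symmetric])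
  apply (simp add: map_pmf_comp case_prod_unfold eta_def)
  done

definition Kp :: "real \<Rightarrow> real \<Rightarrow> (bool \<times> bool \<times> bool) pmf" where
  "Kp p q = pair_pmf (bernoulli_pmf p) (pair_pmf (bernoulli_pmf q) (bernoulli_pmf q))"

definition TT :: "nat \<Rightarrow> real \<Rightarrow> real \<Rightarrow> (node \<Rightarrow> bool \<times> bool \<times> bool) pmf" where
  "TT m p q = Pi_pmf (grid m) (False,False,False) (\<lambda>_. Kp p q)"

definition xi :: "(node \<Rightarrow> bool \<times> bool \<times> bool) \<Rightarrow> node \<Rightarrow> bool" where
  "xi t = (\<lambda>x. fst (t x) \<and> fst (snd (t x)) \<and> snd (snd (t x)))"

definition GG :: "nat \<Rightarrow> (node \<Rightarrow> bool \<times> bool \<times> bool) \<Rightarrow> (node \<Rightarrow> bool) \<times> (node set \<Rightarrow> bool)" where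
  "GG m t = (fst \<circ> t, eta m (fst \<circ> snd \<circ> t) (snd \<circ> snd \<circ> t))"

lemma site_law:
  assumes "0 \<le> p" "p \<le> 1" "0 \<le> q" "q \<le> 1"
  shows "node_pmf m (p * q^2) = map_pmf xi (TT m p q)"
proof -
  have q2: "0 \<le> q*q" "q*q \<le> 1" using assms by (auto intro: mult_le_one)
  have "map_pmf (\<lambda>(a,b,c). a \<and> b \<and> c) (Kp p q)
      = map_pmf (\<lambda>(a,b). a \<and> b) (pair_pmf (bernoulli_pmf p) (map_pmf (\<lambda>(a,b). a \<and> b) (pair_pmf (bernoulli_pmf q) (bernoulli_pmf q))))"
    unfolding Kp_def pair_map_pmf2 map_pmf_comp by (simp add: case_prod_unfold)
  also have "\<dots> = bernoulli_pmf (p * q^2)"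
    using assms q2 by (simp add: bern_and power2_eq_square)
  finally have K: "map_pmf (\<lambda>(a,b,c). a \<and> b \<and> c) (Kp p q) = bernoulli_pmf (p * q^2)" .
    have xi: "xi = (\<lambda>t. (\<lambda>(a,b,c). a \<and> b \<and> c) \<circ> t)" by (auto simp: fun_eq_iff xi_def)
    show ?thesis
    unfolding node_pmf_def TT_def K[symmetric] xi
    by (subst Pi_pmf_map[OF finite_grid, where dflt="(False,False,False)"])
       (auto simp: xi_def o_def case_prod_unfold)
qed

lemma mixed_law: "mixed_pmf m p q = map_pmf (GG m) (TT m p q)"
proof -
  have T1: "TT m p q = map_pmf (\<lambda>(f,g) x. (f x, g x))
     (pair_pmf (node_pmf m p) (Pi_pmf (grid m) (False,False) (\<lambda>_. pair_pmf (bernoulli_pmf q) (bernoulli_pmf q))))"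
    unfolding TT_def Kp_def node_pmf_def by (rule Pi_pmf_pair) simp
  have T2: "Pi_pmf (grid m) (False,False) (\<lambda>_. pair_pmf (bernoulli_pmf q) (bernoulli_pmf q))
     = map_pmf (\<lambda>(f,g) x. (f x, g x)) (pair_pmf (Pi_pmf (grid m) False (\<lambda>_. bernoulli_pmf q)) (Pi_pmf (grid m) False (\<lambda>_. bernoulli_pmf q)))"
    by (rule Pi_pmf_pair) simp
  show ?thesis
    unfolding mixed_pmf_def link_pmf_eq T1 T2 pair_map_pmf2 map_pmf_comp map_pair[symmetric]
    by (simp add: GG_def case_prod_unfold o_def apsnd_def map_prod_def)
qed



lemma eta_rt: "x \<in> HA m \<Longrightarrow> eta m R U {x, rt x} = R x"
  by (auto simp: eta_def hH_def HL_def)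

lemma eta_up: "x \<in> VA m \<Longrightarrow> eta m R U {x, up x} = U x"
proof -
  assume x: "x \<in> VA m"
  have v: "{x, up x} \<in> VL m" using x by (auto simp: VL_def)
  then have "{x, up x} \<notin> HL m" using HL_VL_disj by blast
  then show ?thesis using v x by (simp add: eta_def hV_def)
qed

lemma step_mono:
  assumes "site_step m (xi t) x y"
  shows "bond_step m (fst (GG m t)) (snd (GG m t)) x y"
proof -
  obtain a b where xa: "x = (a,b)" by (cases x)
  obtain c d where yc: "y = (c,d)" by (cases y)
  from assms have g: "x \<in> grid m" "y \<in> grid m" and ad: "adj x y"
    and xx: "fst (t x)" "fst (snd (t x))" "snd (snd (t x))"
    and yy: "fst (t y)" "fst (snd (t y))" "snd (snd (t y))"
    by (auto simp: site_step_def xi_def)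
  have "eta m (fst \<circ> snd \<circ> t) (snd \<circ> snd \<circ> t) {x, y}"
  proof -
    from ad have "(c = Suc a \<and> d = b) \<or> (a = Suc c \<and> d = b) \<or> (c = a \<and> d = Suc b) \<or> (c = a \<and> b = Suc d)"
      by (simp add: adj_iff xa yc)
    then show ?thesis
    proof (elim disjE)
      assume h: "c = Suc a \<and> d = b"
      then have "y = rt x" "x \<in> HA m" using g xa yc by (auto simp: rt_def HA_def grid_def)
      then show ?thesis using eta_rt xx by simp
    next
      assume h: "a = Suc c \<and> d = b"
      then have "x = rt y" "y \<in> HA m" using g xa yc by (auto simp: rt_def HA_def grid_def)
      then show ?thesis using eta_rt[of y m] yy by (simp add: insert_commute)
    next
      assume h: "c = a \<and> d = Suc b"
      then have "y = up x" "x \<in> VA m" using g xa yc by (auto simp: up_def VA_def grid_def)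
      then show ?thesis using eta_up xx by simp
    next
      assume h: "c = a \<and> b = Suc d"
      then have "x = up y" "y \<in> VA m" using g xa yc by (auto simp: up_def VA_def grid_def)
      then show ?thesis using eta_up[of y m] yy by (simp add: insert_commute)
    qed
  qed
  then show ?thesis using g ad xx yy by (simp add: bond_step_def GG_def)
qed

lemma rt_mono:
  "(site_step m (xi t))\<^sup>*\<^sup>* u v \<Longrightarrow> (bond_step m (fst (GG m t)) (snd (GG m t)))\<^sup>*\<^sup>* u v"
  by (induction rule: rtranclp_induct) (auto intro: rtranclp.rtrancl_into_rtrancl step_mono)

lemma bond_reach_grid:
  assumes "(bond_step m \<omega> \<eta>)\<^sup>*\<^sup>* u v" "u \<in> grid m"
  shows "v \<in> grid m"
  using assms by (induction rule: rtranclp_induct) (auto simp: bond_step_def)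

lemma largest_mono: "largest_site m (xi t) \<le> largest_bond m (fst (GG m t)) (snd (GG m t))"
proof -
  let ?\<omega> = "fst (GG m t)" and ?\<eta> = "snd (GG m t)"
  let ?BC = "bond_components m ?\<omega> ?\<eta>"
  have fin: "finite ?BC"
  proof -
    have "?BC \<subseteq> (\<lambda>u. {v. bond_connected m ?\<omega> ?\<eta> u v}) ` grid m"
      unfolding bond_components_def by auto
    then show ?thesis by (rule finite_subset) simp
  qed
  show ?thesis
    unfolding largest_site_def largest_bond_def
  proof (rule Max.boundedI)
    show "finite (insert 0 (card ` site_components m (xi t)))"
    proof -
      have "site_components m (xi t) \<subseteq> (\<lambda>u. {v. (site_step m (xi t))\<^sup>*\<^sup>* u v}) ` grid m"
        unfolding site_components_def by auto
      then have "finite (site_components m (xi t))" by (rule finite_subset) simp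
      then show ?thesis by simp
    qed
  next
    show "insert 0 (card ` site_components m (xi t)) \<noteq> {}" by simp
  next
    fix a assume "a \<in> insert 0 (card ` site_components m (xi t))"
    then consider "a = 0" | u where "u \<in> grid m" "xi t u" "a = card {v. (site_step m (xi t))\<^sup>*\<^sup>* u v}"
      unfolding site_components_def by auto
    then show "a \<le> Max (insert 0 (card ` ?BC))"
    proof cases
      case 1 then show ?thesis by simp
    next
      case 2
      let ?C = "{v. bond_connected m ?\<omega> ?\<eta> u v}"
      have om: "?\<omega> u" using 2 by (simp add: xi_def GG_def)
      have C: "?C \<in> ?BC" unfolding bond_components_def using 2 om by blast
      have finC: "finite ?C"
      proof (rule finite_subset[OF _ finite_grid[of m]])
        show "?C \<subseteq> grid m" unfolding bond_connected_def using bond_reach_grid by blast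
      qed
      have sub: "{v. (site_step m (xi t))\<^sup>*\<^sup>* u v} \<subseteq> ?C"
        unfolding bond_connected_def using rt_mono[of m t u] 2 om by blast
      have "a \<le> card ?C" using card_mono[OF finC sub] 2 by simp
      also have "\<dots> \<le> Max (insert 0 (card ` ?BC))"
        using fin C by (intro Max_ge) auto
      finally show ?thesis .
    qed
  qed
qed

theorem lemma4:
  fixes m :: nat and p q :: real
  assumes "0 \<le> p" "p \<le> 1" "0 \<le> q" "q \<le> 1"
  shows "stoch_dominates
           (map_pmf (\<lambda>(\<omega>, \<eta>). largest_bond m \<omega> \<eta>) (mixed_pmf m p q))
           (map_pmf (largest_site m) (node_pmf m (p * q^2)))"
  unfolding stoch_dominates_def
proof
  fix k :: nat
  show "measure_pmf.prob (map_pmf (largest_site m) (node_pmf m (p * q^2))) {k..}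
     \<le> measure_pmf.prob (map_pmf (\<lambda>(\<omega>, \<eta>). largest_bond m \<omega> \<eta>) (mixed_pmf m p q)) {k..}"
    unfolding site_law[OF assms] mixed_law map_pmf_comp measure_map_pmf
  proof (rule measure_pmf.finite_measure_mono)
    show "(\<lambda>x. largest_site m (xi x)) -` {k..}
      \<subseteq> (\<lambda>x. case GG m x of (\<omega>, \<eta>) \<Rightarrow> largest_bond m \<omega> \<eta>) -` {k..}"
    proof
      fix x assume "x \<in> (\<lambda>x. largest_site m (xi x)) -` {k..}"
      then show "x \<in> (\<lambda>x. case GG m x of (\<omega>, \<eta>) \<Rightarrow> largest_bond m \<omega> \<eta>) -` {k..}"
        using largest_mono[of m x] by (simp add: case_prod_unfold)
    qed
  qed simp
qed

end
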